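(* Let $\ell\ge1$ and $\kappa\ge1$ be integers. For each integer $1\le \nu\le \kappa$ and $u>1$, \[ \widetilde{K}_{\ell}^{(\nu)}(u,\kappa)=(\kappa)_{\nu}\,\widetilde{K}_{\ell}(u,\kappa-\nu)+\sum_{j=0}^{\nu-1}\sum_{m=0}^{\ell}\sum_{r=0}^{\ell-m}\frac{(-1)^{r}\Gamma(\kappa+1)}{m!\,(\ell-m-r)!}E_{\kappa-j,m}C_{r,0}\left(\log^{\ell-m-r}u\right)^{(\nu-j)}, \] where all derivatives are with respect to $u$.
   Context: For integers $\ell\ge1$, $\kappa\ge0$ and $u>1$, define \[ \widetilde{K}_{\ell}(u,\kappa):=\sum_{m=0}^{\ell}\sum_{n=m}^{\kappa}\sum_{r=0}^{\ell-m}\frac{(-1)^{r}\Gamma(\kappa+1)}{m!\,(\ell-m-r)!}E_{n,m}C_{r,\kappa-n}u^{\kappa-n}\log^{\ell-m-r}u, \] where the sum over $n$ is empty if $m>\kappa$; the constants $C_{r,\kappa}$ ($r,\kappa\ge0$) are defined by $\sum_{r\ge0}C_{r,\kappa}z^r=e^{\gamma z}/\Gamma(\kappa+1-z)$ with $\gamma$ Euler's constant; the constants $E_{n,m}$ ($n,m\ge0$) are defined by $\sum_{n\ge0}E_{n,m}z^n=\left(\int_0^z\frac{1-e^{-t}}{t}\,dt\right)^m$. $\widetilde{K}_{\ell}^{(\nu)}$ denotes the $\nu$-th derivative in $u$, $\left(\log^{k}u\right)^{(i)}$ denotes the $i$-th derivative in $u$ of $(\log u)^k$, and $(x)_{n}:=x(x-1)\cdots(x-n+1)$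 is the falling factorial. *)

theory Defs
  imports "HOL-Analysis.Analysis"
begin

definition taylor_coeff :: "nat \<Rightarrow> (real \<Rightarrow> real) \<Rightarrow> real" where
  "taylor_coeff n f = (deriv ^^ n) f 0 / fact n"

definition Ccoef :: "nat \<Rightarrow> nat \<Rightarrow> real" where
  "Ccoef r \<kappa> = taylor_coeff r (\<lambda>z. exp (euler_mascheroni * z) * rGamma (real \<kappa> + 1 - z))"

definition Ein :: "real \<Rightarrow> real" where
  "Ein z = (if 0 \<le> z then integral {0..z} (\<lambda>t. (1 - exp (- t)) / t)
            else - integral {z..0} (\<lambda>t. (1 - exp (- t)) / t))"

definition Ecoef :: "nat \<Rightarrow> nat \<Rightarrow> real" where
  "Ecoef n m = taylor_coeff n (\<lambda>z. Ein z ^ m)"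

definition Ktilde :: "nat \<Rightarrow> real \<Rightarrow> nat \<Rightarrow> real" where
  "Ktilde l u \<kappa> =
     (\<Sum>m=0..l. \<Sum>n=m..\<kappa>. \<Sum>r=0..l-m.
        (-1)^r * Gamma (real \<kappa> + 1) / (fact m * fact (l - m - r))
        * Ecoef n m * Ccoef r (\<kappa> - n) * u ^ (\<kappa> - n) * ln u ^ (l - m - r))"

definition falling :: "real \<Rightarrow> nat \<Rightarrow> real" where
  "falling x n = (\<Prod>i<n. (x - real i))"

end

theory Submission
  imports Defs "HOL-Complex_Analysis.Complex_Analysis"
begin

lemma tr_eq:
  fixes f :: "real \<Rightarrow> real" and F :: "complex \<Rightarrow> complex"
  assumes hol: "F holomorphic_on T" and oT: "open T" and oS: "open S"
    and ST: "\<And>x. x\<in>S \<Longrightarrow> complex_of_real x \<in> T"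
    and fF: "\<And>x. x\<in>S \<Longrightarrow> f x = Re (F (of_real x))"
  shows "\<forall>x\<in>S. (deriv^^n) f x = Re ((deriv^^n) F (of_real x))
     \<and> ((deriv^^n) f has_real_derivative Re ((deriv^^Suc n) F (of_real x))) (at x)"
proof -
  have der: "((deriv^^n) f has_real_derivative Re ((deriv^^Suc n) F (of_real x))) (at x)"
    if eq: "\<forall>y\<in>S. (deriv^^n) f y = Re ((deriv^^n) F (of_real y))" and x: "x \<in> S" for n x
  proof -
    have "(deriv ^^ n) F holomorphic_on T" using hol oT by (rule holomorphic_higher_deriv)
    then have "((deriv ^^ n) F has_field_derivative deriv ((deriv ^^ n) F) (of_real x)) (at (of_real x))"
      using oT ST[OF x] by (intro holomorphic_derivI) auto
    from has_vector_derivative_real_field[OF this]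
    have "((\<lambda>y. (deriv ^^ n) F (of_real y)) has_vector_derivative deriv ((deriv ^^ n) F) (of_real x)) (at x)" .
    from bounded_linear.has_vector_derivative[OF bounded_linear_Re this]
    have "((\<lambda>y. Re ((deriv ^^ n) F (of_real y))) has_real_derivative Re (deriv ((deriv ^^ n) F) (of_real x))) (at x)"
      by (simp add: has_real_derivative_iff_has_vector_derivative)
    then have "((deriv^^n) f has_real_derivative Re (deriv ((deriv ^^ n) F) (of_real x))) (at x)"
      by (rule has_field_derivative_transform_within_open[OF _ oS x]) (use eq in auto)
    then show ?thesis by simp
  qed
  show ?thesis
  proof (induction n)
  case 0
  then show ?case using der[of 0] fF by auto
next
  case (Suc n)
  have eq: "\<forall>y\<in>S. (deriv^^Suc n) f y = Re ((deriv^^Suc n) F (of_real y))"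
    using Suc by (auto intro: DERIV_imp_deriv)
  show ?case using eq der[OF eq] by auto
qed
qed

definition sm_on :: "real set \<Rightarrow> (real \<Rightarrow> real) \<Rightarrow> bool" where
  "sm_on S f \<longleftrightarrow> (\<forall>n. \<forall>x\<in>S. ((deriv^^n) f has_real_derivative deriv ((deriv^^n) f) x) (at x))"

lemma tr_sm:
  fixes f :: "real \<Rightarrow> real" and F :: "complex \<Rightarrow> complex"
  assumes hol: "F holomorphic_on T" and oT: "open T" and oS: "open S"
    and ST: "\<And>x. x\<in>S \<Longrightarrow> complex_of_real x \<in> T"
    and fF: "\<And>x. x\<in>S \<Longrightarrow> f x = Re (F (of_real x))"
  shows "sm_on S f"
  unfolding sm_on_def
proof (intro allI ballI)
  fix n x assume x: "x \<in> S"
  from tr_eq[OF assms, of n] x have "((deriv^^n) f has_real_derivative Re ((deriv^^Suc n) F (of_real x))) (at x)"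
    by auto
  then show "((deriv^^n) f has_real_derivative deriv ((deriv^^n) f) x) (at x)"
    using DERIV_imp_deriv by metis
qed

lemma loc:
  assumes oS: "open S" and fg: "\<And>x. x\<in>S \<Longrightarrow> f x = g x"
  shows "x\<in>S \<Longrightarrow> (deriv^^n) f x = (deriv^^n) g x"
proof (induction n arbitrary: x)
  case 0 then show ?case using fg by simp
next
  case (Suc n)
  have "eventually (\<lambda>y. y \<in> S) (nhds x)" using oS Suc.prems by (rule eventually_nhds_in_open)
  then have "eventually (\<lambda>y. (deriv^^n) f y = (deriv^^n) g y) (nhds x)"
    by (rule eventually_mono) (use Suc.IH in auto)
  then show ?case by (simp add: deriv_cong_ev)
qed

lemma sm_deriv: "sm_on S f \<Longrightarrow> sm_on S (deriv f)"
  unfolding sm_on_def by (metis funpow_Suc_right o_apply)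

lemma sm_sum:
  fixes f :: "'i \<Rightarrow> real \<Rightarrow> real"
  assumes oS: "open S" and fin: "finite I" and sm: "\<And>i. i\<in>I \<Longrightarrow> sm_on S (f i)"
  shows "\<forall>x\<in>S. (deriv^^n) (\<lambda>v. \<Sum>i\<in>I. c i * f i v) x = (\<Sum>i\<in>I. c i * (deriv^^n) (f i) x)"
proof (induction n)
  case 0 then show ?case by simp
next
  case (Suc n)
  show ?case
  proof
    fix x assume x: "x \<in> S"
    have "eventually (\<lambda>y. y \<in> S) (nhds x)" using oS x by (rule eventually_nhds_in_open)
    then have ev: "eventually (\<lambda>y. (deriv^^n) (\<lambda>v. \<Sum>i\<in>I. c i * f i v) y = (\<Sum>i\<in>I. c i * (deriv^^n) (f i) y)) (nhds x)"
      by (rule eventually_mono) (use Suc.IH in auto)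
    have "((\<lambda>y. \<Sum>i\<in>I. c i * (deriv^^n) (f i) y) has_real_derivative (\<Sum>i\<in>I. c i * deriv ((deriv^^n) (f i)) x)) (at x)"
      using sm x unfolding sm_on_def by (intro DERIV_sum DERIV_cmult) auto
    then have "deriv (\<lambda>y. \<Sum>i\<in>I. c i * (deriv^^n) (f i) y) x = (\<Sum>i\<in>I. c i * deriv ((deriv^^n) (f i)) x)"
      by (rule DERIV_imp_deriv)
    then show "(deriv^^Suc n) (\<lambda>v. \<Sum>i\<in>I. c i * f i v) x = (\<Sum>i\<in>I. c i * (deriv^^Suc n) (f i) x)"
      using deriv_cong_ev[OF ev refl] by simp
  qed
qed

lemma sm_sum_sm:
  fixes f :: "'i \<Rightarrow> real \<Rightarrow> real"
  assumes oS: "open S" and fin: "finite I" and sm: "\<And>i. i\<in>I \<Longrightarrow> sm_on S (f i)"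
  shows "sm_on S (\<lambda>v. \<Sum>i\<in>I. c i * f i v)"
  unfolding sm_on_def
proof (intro allI ballI)
  fix n x assume x: "x \<in> S"
  have "((\<lambda>y. \<Sum>i\<in>I. c i * (deriv^^n) (f i) y) has_real_derivative (\<Sum>i\<in>I. c i * deriv ((deriv^^n) (f i)) x)) (at x)"
    using sm x unfolding sm_on_def by (intro DERIV_sum DERIV_cmult) auto
  then have "((deriv^^n) (\<lambda>v. \<Sum>i\<in>I. c i * f i v) has_real_derivative (\<Sum>i\<in>I. c i * deriv ((deriv^^n) (f i)) x)) (at x)"
    by (rule has_field_derivative_transform_within_open[OF _ oS x]) (use sm_sum[OF assms] in auto)
  then show "((deriv^^n) (\<lambda>v. \<Sum>i\<in>I. c i * f i v) has_real_derivative deriv ((deriv^^n) (\<lambda>v. \<Sum>i\<in>I. c i * f i v)) x) (at x)"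
    using DERIV_imp_deriv by metis
qed

lemma hd_at:
  fixes G :: "complex \<Rightarrow> complex"
  assumes "G holomorphic_on UNIV"
  shows "((deriv^^n) G has_field_derivative (deriv^^Suc n) G z) (at z)"
proof -
  have "(deriv ^^ n) G holomorphic_on UNIV" using assms by (rule holomorphic_higher_deriv) simp
  then show ?thesis by (auto intro: holomorphic_derivI)
qed

lemma lin_prod:
  fixes G :: "complex \<Rightarrow> complex"
  assumes hol: "G holomorphic_on UNIV"
  shows "(deriv^^r) (\<lambda>z. (a - z) * G z) = (\<lambda>z. (a - z) * (deriv^^r) G z - of_nat r * (deriv^^(r-1)) G z)"
proof (induction r)
  case 0 then show ?case by simp
next
  case (Suc r)
  have "deriv (\<lambda>z. (a - z) * (deriv^^r) G z - of_nat r * (deriv^^(r-1)) G z) z =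
        (a - z) * (deriv^^Suc r) G z - of_nat (Suc r) * (deriv^^(Suc r - 1)) G z" for z
  proof (rule DERIV_imp_deriv)
    have e: "of_nat r * (deriv^^Suc (r-1)) G z = of_nat r * (deriv^^r) G z"
      by (cases r) auto
    show "((\<lambda>z. (a - z) * (deriv^^r) G z - of_nat r * (deriv^^(r-1)) G z) has_field_derivative
        (a - z) * (deriv^^Suc r) G z - of_nat (Suc r) * (deriv^^(Suc r - 1)) G z) (at z)"
      apply (rule derivative_eq_intros hd_at[OF hol] | simp)+
      using e by (simp add: algebra_simps) metis
  qed
  then show ?case unfolding funpow.simps o_apply Suc.IH by (simp add: fun_eq_iff)
qed

definition FC :: "nat \<Rightarrow> complex \<Rightarrow> complex" where
  "FC k z = exp (of_real euler_mascheroni * z) * rGamma (of_nat k + 1 - z)"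

lemma FC_hol: "FC k holomorphic_on UNIV"
  unfolding FC_def by (intro holomorphic_intros)

lemma FC_real: "Re (FC k (of_real x)) = exp (euler_mascheroni * x) * rGamma (real k + 1 - x)"
proof -
  have "(of_nat k + 1 - complex_of_real x) = of_real (real k + 1 - x)" by simp
  then have "FC k (of_real x) = of_real (exp (euler_mascheroni * x) * rGamma (real k + 1 - x))"
    unfolding FC_def by (simp only: rGamma_complex_of_real of_real_mult flip: exp_of_real)
  then show ?thesis by simp
qed

lemma Ccoef_FC: "Ccoef r k = Re ((deriv^^r) (FC k) 0) / fact r"
proof -
  have "\<forall>x\<in>UNIV. (deriv^^r) (\<lambda>z. exp (euler_mascheroni * z) * rGamma (real k + 1 - z)) x = Re ((deriv^^r) (FC k) (of_real x))
     \<and> ((deriv^^r) (\<lambda>z. exp (euler_mascheroni * z) * rGamma (real k + 1 - z)) has_real_derivative Re ((deriv^^Suc r) (FC k) (of_real x))) (at x)"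
    by (rule tr_eq[OF FC_hol]) (auto simp: FC_real)
  then show ?thesis unfolding Ccoef_def taylor_coeff_def by simp
qed

lemma FC_rec: "k \<ge> 1 \<Longrightarrow> FC (k - 1) = (\<lambda>z. (of_nat k - z) * FC k z)"
proof
  fix z :: complex assume k: "k \<ge> 1"
  have "rGamma (of_nat (k-1) + 1 - z) = rGamma (of_nat k - z)" using k by (simp add: of_nat_diff)
  also have "\<dots> = (of_nat k - z) * rGamma (of_nat k - z + 1)" by (simp add: rGamma_plus1)
  also have "of_nat k - z + 1 = of_nat k + 1 - z" by simp
  finally have e: "rGamma (of_nat (k-1) + 1 - z) = (of_nat k - z) * rGamma (of_nat k + 1 - z)" .
  show "FC (k - 1) z = (of_nat k - z) * FC k z"
    unfolding FC_def e by (simp add: algebra_simps)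
qed

lemma C_rec0: "k \<ge> 1 \<Longrightarrow> Ccoef 0 (k - 1) = real k * Ccoef 0 k"
  unfolding Ccoef_FC by (simp only: FC_rec) simp

lemma C_rec: "k \<ge> 1 \<Longrightarrow> r \<ge> 1 \<Longrightarrow> Ccoef r (k - 1) = real k * Ccoef r k - Ccoef (r - 1) k"
proof -
  assume k: "k \<ge> 1" and r: "r \<ge> 1"
  have "(deriv^^r) (FC (k-1)) 0 = of_nat k * (deriv^^r) (FC k) 0 - of_nat r * (deriv^^(r-1)) (FC k) 0"
    unfolding FC_rec[OF k] lin_prod[OF FC_hol] by simp
  then have "Re ((deriv^^r) (FC (k-1)) 0) = real k * Re ((deriv^^r) (FC k) 0) - real r * Re ((deriv^^(r-1)) (FC k) 0)"
    by simp
  moreover have "fact r = real r * fact (r - 1)" using r by (metis fact_nonzero fact_num_eq_if of_nat_eq_0_iff not_one_le_zero) 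
  ultimately show ?thesis using r unfolding Ccoef_FC by (simp add: field_simps)
qed

definition HH :: "complex \<Rightarrow> complex" where
  "HH z = (if z = 0 then 1 else (1 - exp (- z)) / z)"

lemma HH_hol: "HH holomorphic_on UNIV"
proof (rule no_isolated_singularity'[where K="{0}"])
  have "((\<lambda>z::complex. exp (- z)) has_field_derivative -1) (at 0)"
    by (auto intro!: derivative_eq_intros)
  then have "((\<lambda>y. (exp (- y) - exp (- 0)) / (y - 0)) \<longlongrightarrow> -1) (at (0::complex))"
    by (simp add: has_field_derivative_iff)
  then have "((\<lambda>y. - ((exp (- y) - 1) / y)) \<longlongrightarrow> 1) (at (0::complex))"
    by (auto dest: tendsto_minus)
  moreover have "eventually (\<lambda>y. - ((exp (- y) - 1) / y) = HH y) (at (0::complex))"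
    by (auto simp: eventually_at_filter HH_def field_simps)
  ultimately have "(HH \<longlongrightarrow> 1) (at 0)" by (rule Lim_transform_eventually)
  then show "\<And>z. z \<in> {0} \<Longrightarrow> (HH \<longlongrightarrow> HH z) (at z within UNIV)" by (simp add: HH_def)
  have "(\<lambda>z. (1 - exp (- z)) / z) holomorphic_on (UNIV - {0})"
    by (intro holomorphic_intros) auto
  then show "HH holomorphic_on UNIV - {0}"
    by (rule holomorphic_transform) (auto simp: HH_def)
qed auto

definition EE :: "complex \<Rightarrow> complex" where
  "EE = (SOME g. \<forall>x. (g has_field_derivative HH x) (at x) \<and> g 0 = 0)"

lemma EE_props: "(EE has_field_derivative HH x) (at x)" "EE 0 = 0"
proof -
  obtain g where g: "\<And>x. x \<in> UNIV \<Longrightarrow> (g has_field_derivative HH x) (at x within UNIV)"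
    using holomorphic_convex_primitive'[OF convex_UNIV open_UNIV HH_hol] by blast
  have "\<exists>g. \<forall>x. (g has_field_derivative HH x) (at x) \<and> g 0 = 0"
  proof (rule exI[of _ "\<lambda>z. g z - g 0"], intro allI conjI)
    fix x
    have "(g has_field_derivative HH x) (at x)" using g[of x] by simp
    from DERIV_diff[OF this DERIV_const[of "g 0"]]
    show "((\<lambda>z. g z - g 0) has_field_derivative HH x) (at x)" by simp
  qed simp
  from someI_ex[OF this] show "(EE has_field_derivative HH x) (at x)" "EE 0 = 0"
    unfolding EE_def by auto
qed

lemma EE_hol: "EE holomorphic_on UNIV"
  unfolding holomorphic_on_def field_differentiable_def using EE_props(1) has_field_derivative_at_within by blast

definition ht :: "real \<Rightarrow> real" where
  "ht x = (if x = 0 then 1 else (1 - exp (- x)) / x)"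

lemma HH_real: "HH (of_real x) = of_real (ht x)"
  by (simp add: HH_def ht_def exp_of_real flip: of_real_minus)

lemma EE_real_der:
  "((\<lambda>x. Re (EE (of_real x))) has_real_derivative ht x) (at x within s)"
  "((\<lambda>x. Im (EE (of_real x))) has_real_derivative 0) (at x within s)"
proof -
  have "((\<lambda>x. EE (of_real x)) has_vector_derivative HH (of_real x)) (at x within s)"
    by (rule has_vector_derivative_real_field[OF EE_props(1)])
  from bounded_linear.has_vector_derivative[OF bounded_linear_Re this]
       bounded_linear.has_vector_derivative[OF bounded_linear_Im this]
  show "((\<lambda>x. Re (EE (of_real x))) has_real_derivative ht x) (at x within s)"
       "((\<lambda>x. Im (EE (of_real x))) has_real_derivative 0) (at x within s)"
    by (simp_all add: HH_real has_real_derivative_iff_has_vector_derivative)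
qed

lemma EE_Im: "Im (EE (of_real x)) = 0"
proof -
  have "Im (EE (of_real x)) = Im (EE (of_real 0))"
    by (rule DERIV_isconst_all) (use EE_real_der(2) in blast)
  then show ?thesis by (simp add: EE_props)
qed

lemma Ein_EE: "complex_of_real (Ein x) = EE (of_real x)"
proof -
  let ?e = "\<lambda>x. Re (EE (of_real x))"
  let ?h = "\<lambda>t::real. (1 - exp (- t)) / t"
  have spike: "(?h has_integral I) {a..b} \<longleftrightarrow> (ht has_integral I) {a..b}" for I a b
    by (rule has_integral_spike_finite_eq[of "{0}"]) (auto simp: ht_def)
  have ftc: "(ht has_integral (?e b - ?e a)) {a..b}" if "a \<le> b" for a b
    by (rule fundamental_theorem_of_calculus[OF that])
       (auto simp: has_real_derivative_iff_has_vector_derivative[symmetric] intro: EE_real_der)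
  have e0: "?e 0 = 0" by (simp add: EE_props)
  have "Ein x = ?e x"
  proof (cases "0 \<le> x")
    case True
    then have "(?h has_integral ?e x) {0..x}" using spike ftc[OF True] e0 by simp
    then show ?thesis using True by (simp add: Ein_def integral_unique)
  next
    case False
    then have "(?h has_integral - ?e x) {x..0}" using spike ftc[of x 0] e0 by simp
    then show ?thesis using False by (simp add: Ein_def integral_unique)
  qed
  then show ?thesis using EE_Im[of x] by (simp add: complex_eq_iff)
qed

lemma EEpow_zero: "n < m \<Longrightarrow> (deriv^^n) (\<lambda>z. EE z ^ m) 0 = 0"
proof (induction m arbitrary: n)
  case 0 then show ?case by simp
next
  case (Suc m)
  have "(deriv^^n) (\<lambda>z. EE z ^ Suc m) 0 = (deriv^^n) (\<lambda>z. EE z * EE z ^ m) 0" by simp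
  also have "\<dots> = (\<Sum>i = 0..n. of_nat (n choose i) * (deriv ^^ i) EE 0 * (deriv ^^ (n-i)) (\<lambda>z. EE z ^ m) 0)"
    by (rule higher_deriv_mult[of _ UNIV]) (auto intro: holomorphic_intros EE_hol)
  also have "\<dots> = 0"
  proof (rule sum.neutral, rule ballI)
    fix i assume i: "i \<in> {0..n}"
    show "of_nat (n choose i) * (deriv ^^ i) EE 0 * (deriv ^^ (n-i)) (\<lambda>z. EE z ^ m) 0 = 0"
    proof (cases "i = 0")
      case True then show ?thesis by (simp add: EE_props)
    next
      case False then have "n - i < m" using Suc.prems i by auto
      then show ?thesis using Suc.IH by simp
    qed
  qed
  finally show ?case .
qed

lemma Ecoef_zero: "n < m \<Longrightarrow> Ecoef n m = 0"
proof -
  assume nm: "n < m"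
  have "\<forall>x\<in>UNIV. (deriv^^n) (\<lambda>z. Ein z ^ m) x = Re ((deriv^^n) (\<lambda>z. EE z ^ m) (of_real x))
     \<and> ((deriv^^n) (\<lambda>z. Ein z ^ m) has_real_derivative Re ((deriv^^Suc n) (\<lambda>z. EE z ^ m) (of_real x))) (at x)"
    by (rule tr_eq[of _ UNIV]) (auto intro: holomorphic_intros EE_hol simp flip: Ein_EE)
  then show ?thesis using EEpow_zero[OF nm] unfolding Ecoef_def taylor_coeff_def by simp
qed

lemma C_rec': "k \<ge> 1 \<Longrightarrow> Ccoef r (k - 1) = real k * Ccoef r k - (if r = 0 then 0 else Ccoef (r - 1) k)"
  using C_rec0 C_rec by (cases "r = 0") auto

lemma shift_id:
  fixes X c :: "nat \<Rightarrow> real"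
  assumes h: "\<And>r. r < N \<Longrightarrow> real (N - r) * c r = - c (Suc r)"
  shows "(\<Sum>r=0..N. real (N - r) * c r * X r * L^(N-r-1)) = - (\<Sum>r=0..N. c r * (if r = 0 then 0 else X (r-1)) * L^(N-r))"
proof (cases N)
  case 0 then show ?thesis by simp
next
  case (Suc M)
  have "(\<Sum>r=0..N. real (N - r) * c r * X r * L^(N-r-1)) = (\<Sum>r=0..M. real (N - r) * c r * X r * L^(N-r-1))"
    using Suc by (simp add: sum.atLeast0_atMost_Suc)
  also have "\<dots> = (\<Sum>r=0..M. - (c (Suc r) * X r * L^(N - Suc r)))"
  proof (rule sum.cong[OF refl])
    fix r assume "r \<in> {0..M}"
    then have r: "r < N" using Suc by auto
    have e: "N - r - 1 = N - Suc r" by simp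
    show "real (N - r) * c r * X r * L^(N-r-1) = - (c (Suc r) * X r * L^(N - Suc r))"
      unfolding e h[OF r] by simp
  qed
  also have "\<dots> = - (\<Sum>r=0..M. c (Suc r) * X r * L^(N - Suc r))"
    by (simp add: sum_negf)
  also have "(\<Sum>r=0..M. c (Suc r) * X r * L^(N - Suc r)) = (\<Sum>r=0..N. c r * (if r = 0 then 0 else X (r-1)) * L^(N-r))"
    unfolding Suc sum.atLeast0_atMost_Suc_shift by simp
  finally show ?thesis .
qed

definition Q :: "nat \<Rightarrow> nat \<Rightarrow> nat \<Rightarrow> real \<Rightarrow> real" where
  "Q l m k v = (\<Sum>r=0..l-m. (-1)^r / (fact m * fact (l - m - r)) * Ccoef r k * (v^k * ln v ^ (l - m - r)))"

lemma term_der: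
  assumes "k \<ge> 1" "v > 0"
  shows "((\<lambda>v. v^k * ln v ^ p) has_real_derivative (real k * v^(k-1) * ln v ^ p + real p * v^(k-1) * ln v ^ (p-1))) (at v)"
proof -
  have "((\<lambda>v. v^k * ln v ^ p) has_real_derivative (real k * v^(k-1) * ln v ^ p + v^k * (real p * ln v ^ (p-1) * (1/v)))) (at v)"
    using assms by (auto intro!: derivative_eq_intros)
  moreover have "v^k * (real p * ln v ^ (p-1) * (1/v)) = real p * v^(k-1) * ln v ^ (p-1)"
    using assms by (cases k) (auto simp: field_simps)
  ultimately show ?thesis by simp
qed

lemma Q_der:
  assumes k: "k \<ge> 1" and v: "v > 0"
  shows "(Q l m k has_real_derivative Q l m (k-1) v) (at v)"
proof -
  define N where "N = l - m"
  define c where "c = (\<lambda>r. (-1)^r / (fact m * fact (N - r)) :: real)"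
  have QN: "Q l m k' w = (\<Sum>r=0..N. c r * Ccoef r k' * (w^k' * ln w ^ (N - r)))" for k' w
    unfolding Q_def N_def c_def by simp
  have "((\<lambda>w. \<Sum>r=0..N. c r * Ccoef r k * (w^k * ln w ^ (N - r))) has_real_derivative
        (\<Sum>r=0..N. c r * Ccoef r k * (real k * v^(k-1) * ln v ^ (N - r) + real (N - r) * v^(k-1) * ln v ^ (N - r - 1)))) (at v)"
    by (intro DERIV_sum DERIV_cmult term_der k v)
  moreover have "(\<Sum>r=0..N. c r * Ccoef r k * (real k * v^(k-1) * ln v ^ (N - r) + real (N - r) * v^(k-1) * ln v ^ (N - r - 1)))
     = Q l m (k-1) v"
  proof -
    have h: "real (N - r) * c r = - c (Suc r)" if "r < N" for r
    proof -
      define d where "d = N - Suc r"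
      have d: "N - r = Suc d" "N - Suc r = d" using that unfolding d_def by simp_all
      have f: "fact (Suc d) = real (Suc d) * (fact d :: real)" by simp
      have "real (Suc d) * ((-1)^r / (fact m * (real (Suc d) * fact d))) = - ((-1) ^ Suc r / (fact m * fact d))"
        by (simp del: of_nat_Suc)
      then show ?thesis unfolding c_def d f .
    qed
    have S: "(\<Sum>r=0..N. real (N - r) * c r * Ccoef r k * ln v^(N-r-1)) =
       - (\<Sum>r=0..N. c r * (if r = 0 then 0 else Ccoef (r-1) k) * ln v^(N-r))"
      by (rule shift_id[OF h])
    have "(\<Sum>r=0..N. c r * Ccoef r k * (real k * v^(k-1) * ln v ^ (N - r) + real (N - r) * v^(k-1) * ln v ^ (N - r - 1)))
       = (\<Sum>r=0..N. real k * c r * Ccoef r k * v^(k-1) * ln v ^ (N - r))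
         + v^(k-1) * (\<Sum>r=0..N. real (N - r) * c r * Ccoef r k * ln v^(N-r-1))"
      by (simp only: sum.distrib sum_distrib_left distrib_left mult_ac)
    also have "\<dots> = (\<Sum>r=0..N. real k * c r * Ccoef r k * v^(k-1) * ln v ^ (N - r))
         - v^(k-1) * (\<Sum>r=0..N. c r * (if r = 0 then 0 else Ccoef (r-1) k) * ln v^(N-r))"
      unfolding S by simp
    also have "\<dots> = (\<Sum>r=0..N. c r * (real k * Ccoef r k - (if r = 0 then 0 else Ccoef (r-1) k)) * (v^(k-1) * ln v ^ (N - r)))"
      unfolding sum_distrib_left sum_subtractf[symmetric]
      by (rule sum.cong[OF refl]) (simp add: algebra_simps)
    also have "\<dots> = Q l m (k-1) v"
      unfolding QN using C_rec'[OF k] by simp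
    finally show ?thesis .
  qed
  ultimately show ?thesis unfolding QN by simp
qed

definition dL :: "nat \<Rightarrow> real \<Rightarrow> real" where
  "dL p = deriv (\<lambda>v. ln v ^ p)"

lemma dL_der: "v > 0 \<Longrightarrow> ((\<lambda>v. ln v ^ p) has_real_derivative dL p v) (at v)"
proof -
  assume v: "v > 0"
  have "((\<lambda>v. ln v ^ p) has_real_derivative real p * ln v ^ (p-1) * (1/v)) (at v)"
    using v by (auto intro!: derivative_eq_intros)
  then show ?thesis unfolding dL_def using DERIV_imp_deriv by metis
qed

lemma Q0_der:
  assumes v: "v > 0"
  shows "(Q l m 0 has_real_derivative (\<Sum>r=0..l-m. (-1)^r / (fact m * fact (l - m - r)) * Ccoef r 0 * dL (l - m - r) v)) (at v)"
proof -
  have qe: "Q l m 0 = (\<lambda>v. \<Sum>r=0..l-m. (-1)^r / (fact m * fact (l - m - r)) * Ccoef r 0 * ln v ^ (l - m - r))"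
    unfolding Q_def by simp
  show ?thesis unfolding qe by (intro DERIV_sum DERIV_cmult dL_der v)
qed

lemma sm_sum': "open S \<Longrightarrow> finite I \<Longrightarrow> (\<And>i. i\<in>I \<Longrightarrow> sm_on S (g i)) \<Longrightarrow> sm_on S (\<lambda>v. \<Sum>i\<in>I. g i v)"
  using sm_sum_sm[of S I g "\<lambda>_. 1"] by simp

lemma der_sum': "open S \<Longrightarrow> finite I \<Longrightarrow> (\<And>i. i\<in>I \<Longrightarrow> sm_on S (g i)) \<Longrightarrow> x \<in> S \<Longrightarrow>
   (deriv^^n) (\<lambda>v. \<Sum>i\<in>I. g i v) x = (\<Sum>i\<in>I. (deriv^^n) (g i) x)"
  using sm_sum[of S I g n "\<lambda>_. 1"] by simp

lemma sm_cmul: "open S \<Longrightarrow> sm_on S f \<Longrightarrow> sm_on S (\<lambda>v. c * f v)"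
  using sm_sum_sm[of S "{()}" "\<lambda>_. f" "\<lambda>_. c"] by simp

lemma der_lin2:
  assumes "open S" "sm_on S f" "sm_on S g" "x \<in> S"
  shows "(deriv^^n) (\<lambda>v. a * f v + b * g v) x = a * (deriv^^n) f x + b * (deriv^^n) g x"
proof -
  have "\<forall>x\<in>S. (deriv^^n) (\<lambda>v. \<Sum>i\<in>{True,False}. (\<lambda>i. if i then a else b) i * (\<lambda>i. if i then f else g) i v) x
     = (\<Sum>i\<in>{True,False}. (\<lambda>i. if i then a else b) i * (deriv^^n) ((\<lambda>i. if i then f else g) i) x)"
    by (rule sm_sum) (use assms in auto)
  then show ?thesis using assms(4) by simp
qed

lemma sm_w: "sm_on {0<..} (\<lambda>v. v^k * ln v ^ p)"
proof (rule tr_sm[where F = "\<lambda>z. z^k * Ln z ^ p" and T = "{z. 0 < Re z}"])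
  show "(\<lambda>z. z ^ k * Ln z ^ p) holomorphic_on {z. 0 < Re z}"
    by (intro holomorphic_intros) (auto simp: nonpos_Reals_def)
  show "open {z. 0 < Re z}" by (simp add: open_halfspace_Re_gt)
  fix x :: real assume x: "x \<in> {0<..}"
  then show "complex_of_real x \<in> {z. 0 < Re z}" by simp
  have L: "Ln (complex_of_real x) = of_real (ln x)" using x by (simp add: Ln_of_real)
  have "complex_of_real x ^ k * Ln (of_real x) ^ p = of_real (x^k * ln x ^ p)"
    unfolding L by simp
  then show "x ^ k * ln x ^ p = Re (complex_of_real x ^ k * Ln (complex_of_real x) ^ p)"
    by (simp only: Re_complex_of_real)
qed simp

lemma sm_L: "sm_on {0<..} (\<lambda>v. ln v ^ p)"
  using sm_w[of 0 p] by simp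

lemma sm_dL: "sm_on {0<..} (dL p)"
  unfolding dL_def by (rule sm_deriv[OF sm_L])

lemma sm_K: "sm_on {0<..} (\<lambda>v. Ktilde l v \<kappa>)"
proof -
  have "(\<lambda>v. Ktilde l v \<kappa>) = (\<lambda>v. \<Sum>m=0..l. \<Sum>n=m..\<kappa>. \<Sum>r=0..l-m.
        ((-1)^r * Gamma (real \<kappa> + 1) / (fact m * fact (l - m - r)) * Ecoef n m * Ccoef r (\<kappa> - n)) * (v ^ (\<kappa> - n) * ln v ^ (l - m - r)))"
    by (simp add: Ktilde_def mult.assoc fun_eq_iff)
  moreover have "sm_on {0<..} \<dots>"
    by (intro sm_sum' sm_cmul sm_w finite_atLeastAtMost open_greaterThan)
  ultimately show ?thesis by simp
qed

definition Tk :: "nat \<Rightarrow> nat \<Rightarrow> real \<Rightarrow> real" where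
  "Tk l \<kappa> v = (\<Sum>m=0..l. \<Sum>r=0..l-m. (-1)^r * Gamma (real \<kappa> + 1) / (fact m * fact (l - m - r))
        * Ecoef \<kappa> m * Ccoef r 0 * dL (l - m - r) v)"

lemma sm_T: "sm_on {0<..} (Tk l \<kappa>)"
proof -
  have "Tk l \<kappa> = (\<lambda>v. \<Sum>m=0..l. \<Sum>r=0..l-m. ((-1)^r * Gamma (real \<kappa> + 1) / (fact m * fact (l - m - r))
        * Ecoef \<kappa> m * Ccoef r 0) * dL (l - m - r) v)"
    by (simp add: Tk_def fun_eq_iff)
  moreover have "sm_on {0<..} \<dots>"
    by (intro sm_sum' sm_cmul sm_dL finite_atLeastAtMost open_greaterThan)
  ultimately show ?thesis by simp
qed

lemma K_Q: "Ktilde l v \<kappa> = (\<Sum>m=0..l. \<Sum>n=m..\<kappa>. Gamma (real \<kappa> + 1) * Ecoef n m * Q l m (\<kappa> - n) v)"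
  unfolding Ktilde_def Q_def
  by (simp add: sum_distrib_left divide_inverse mult_ac)

lemma inner_der:
  assumes v: "v > 0"
  shows "((\<lambda>w. \<Sum>n=m..\<kappa>. G * Ecoef n m * Q l m (\<kappa> - n) w) has_real_derivative
     (\<Sum>n\<in>{m..<\<kappa>}. G * Ecoef n m * Q l m (\<kappa> - n - 1) v)
     + G * Ecoef \<kappa> m * (\<Sum>r=0..l-m. (-1)^r / (fact m * fact (l - m - r)) * Ccoef r 0 * dL (l - m - r) v)) (at v)"
proof (cases "m \<le> \<kappa>")
  case True
  have "{m..\<kappa>} = insert \<kappa> {m..<\<kappa>}" using True by auto
  then have e: "(\<lambda>w. \<Sum>n=m..\<kappa>. G * Ecoef n m * Q l m (\<kappa> - n) w) =
     (\<lambda>w. (\<Sum>n\<in>{m..<\<kappa>}. G * Ecoef n m * Q l m (\<kappa> - n) w) + G * Ecoef \<kappa> m * Q l m 0 w)"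
    by (simp add: fun_eq_iff)
  show ?thesis unfolding e
    by (intro DERIV_add DERIV_sum DERIV_cmult Q_der Q0_der v) auto
next
  case False
  then show ?thesis by (simp add: Ecoef_zero)
qed

lemma K_der:
  assumes k: "\<kappa> \<ge> 1" and v: "v > 0"
  shows "((\<lambda>v. Ktilde l v \<kappa>) has_real_derivative real \<kappa> * Ktilde l v (\<kappa> - 1) + Tk l \<kappa> v) (at v)"
proof -
  let ?G = "Gamma (real \<kappa> + 1)"
  have "((\<lambda>w. \<Sum>m=0..l. \<Sum>n=m..\<kappa>. ?G * Ecoef n m * Q l m (\<kappa> - n) w) has_real_derivative
     (\<Sum>m=0..l. (\<Sum>n\<in>{m..<\<kappa>}. ?G * Ecoef n m * Q l m (\<kappa> - n - 1) v)
     + ?G * Ecoef \<kappa> m * (\<Sum>r=0..l-m. (-1)^r / (fact m * fact (l - m - r)) * Ccoef r 0 * dL (l - m - r) v))) (at v)"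
    by (intro DERIV_sum inner_der v)
  moreover have "(\<Sum>m=0..l. (\<Sum>n\<in>{m..<\<kappa>}. ?G * Ecoef n m * Q l m (\<kappa> - n - 1) v)
     + ?G * Ecoef \<kappa> m * (\<Sum>r=0..l-m. (-1)^r / (fact m * fact (l - m - r)) * Ccoef r 0 * dL (l - m - r) v))
     = real \<kappa> * Ktilde l v (\<kappa> - 1) + Tk l \<kappa> v"
  proof -
    have gam: "?G = real \<kappa> * Gamma (real (\<kappa> - 1) + 1)"
    proof -
      have g1: "Gamma (real n + 1) = fact n" for n using Gamma_fact[of n] by (simp add: add.commute)
      show ?thesis unfolding g1 using k by (simp add: fact_reduce[of \<kappa>])
    qed
    have iv: "{m..<\<kappa>} = {m..\<kappa> - 1}" for m using k by auto
    have A: "(\<Sum>m=0..l. \<Sum>n\<in>{m..<\<kappa>}. ?G * Ecoef n m * Q l m (\<kappa> - n - 1) v) = real \<kappa> * Ktilde l v (\<kappa> - 1)"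
      unfolding K_Q sum_distrib_left iv gam
      by (intro sum.cong refl) (simp add: mult_ac)
    have B: "(\<Sum>m=0..l. ?G * Ecoef \<kappa> m * (\<Sum>r=0..l-m. (-1)^r / (fact m * fact (l - m - r)) * Ccoef r 0 * dL (l - m - r) v))
       = Tk l \<kappa> v"
      unfolding Tk_def by (simp add: sum_distrib_left divide_inverse mult_ac)
    show ?thesis unfolding sum.distrib A B ..
  qed
  ultimately show ?thesis unfolding K_Q[symmetric] by simp
qed

lemma main:
  "\<kappa> \<ge> \<nu> \<Longrightarrow> u > 0 \<Longrightarrow> (deriv^^\<nu>) (\<lambda>v. Ktilde l v \<kappa>) u =
     falling (real \<kappa>) \<nu> * Ktilde l u (\<kappa> - \<nu>)
     + (\<Sum>j<\<nu>. \<Sum>m=0..l. \<Sum>r=0..l-m.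
          (-1)^r * Gamma (real \<kappa> + 1) / (fact m * fact (l - m - r))
          * Ecoef (\<kappa> - j) m * Ccoef r 0
          * (deriv ^^ (\<nu> - j)) (\<lambda>v. ln v ^ (l - m - r)) u)"
proof (induction \<nu> arbitrary: \<kappa> u)
  case 0
  then show ?case by (simp add: falling_def)
next
  case (Suc \<nu>)
  have k: "\<kappa> \<ge> 1" and kn: "\<kappa> - 1 \<ge> \<nu>" and u: "u \<in> {0<..}" using Suc.prems by auto
  let ?S = "{0<..} :: real set"
  have d: "deriv (\<lambda>v. Ktilde l v \<kappa>) v = real \<kappa> * Ktilde l v (\<kappa> - 1) + 1 * Tk l \<kappa> v" if "v \<in> ?S" for v
    using K_der[OF k, of v l] that DERIV_imp_deriv by auto
  have "(deriv^^Suc \<nu>) (\<lambda>v. Ktilde l v \<kappa>) u = (deriv^^\<nu>) (deriv (\<lambda>v. Ktilde l v \<kappa>)) u"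
    by (simp only: funpow_Suc_right o_apply)
  also have "\<dots> = (deriv^^\<nu>) (\<lambda>v. real \<kappa> * Ktilde l v (\<kappa> - 1) + 1 * Tk l \<kappa> v) u"
    by (rule loc[OF _ d u]) simp
  also have "\<dots> = real \<kappa> * (deriv^^\<nu>) (\<lambda>v. Ktilde l v (\<kappa> - 1)) u + 1 * (deriv^^\<nu>) (Tk l \<kappa>) u"
    by (rule der_lin2[OF _ sm_K sm_T u]) simp
  finally have step1: "(deriv^^Suc \<nu>) (\<lambda>v. Ktilde l v \<kappa>) u =
      real \<kappa> * (deriv^^\<nu>) (\<lambda>v. Ktilde l v (\<kappa> - 1)) u + (deriv^^\<nu>) (Tk l \<kappa>) u" by simp
  have T: "(deriv^^\<nu>) (Tk l \<kappa>) u = (\<Sum>m=0..l. \<Sum>r=0..l-m. (-1)^r * Gamma (real \<kappa> + 1) / (fact m * fact (l - m - r))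
        * Ecoef \<kappa> m * Ccoef r 0 * (deriv ^^ Suc \<nu>) (\<lambda>v. ln v ^ (l - m - r)) u)"
  proof -
    let ?c = "\<lambda>m r. (-1)^r * Gamma (real \<kappa> + 1) / (fact m * fact (l - m - r)) * Ecoef \<kappa> m * Ccoef r 0"
    have "Tk l \<kappa> = (\<lambda>v. \<Sum>m=0..l. \<Sum>r=0..l-m. ?c m r * dL (l - m - r) v)"
      by (simp add: Tk_def fun_eq_iff)
    note tk = this
    have sm_in: "sm_on ?S (\<lambda>v. \<Sum>r=0..l-m. ?c m r * dL (l - m - r) v)" for m
      by (intro sm_sum' sm_cmul sm_dL) simp_all
    have "(deriv^^\<nu>) (Tk l \<kappa>) u = (\<Sum>m=0..l. (deriv^^\<nu>) (\<lambda>v. \<Sum>r=0..l-m. ?c m r * dL (l - m - r) v) u)"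
      unfolding tk by (rule der_sum'[OF _ _ sm_in u]) simp_all
    also have "\<dots> = (\<Sum>m=0..l. \<Sum>r=0..l-m. ?c m r * (deriv^^\<nu>) (dL (l - m - r)) u)"
    proof (rule sum.cong[OF refl])
      fix m
      show "(deriv^^\<nu>) (\<lambda>v. \<Sum>r=0..l-m. ?c m r * dL (l - m - r) v) u = (\<Sum>r=0..l-m. ?c m r * (deriv^^\<nu>) (dL (l - m - r)) u)"
        using sm_sum[of ?S "{0..l-m}" "\<lambda>r. dL (l - m - r)" \<nu> "?c m"] sm_dL u by simp
    qed
    also have "\<dots> = (\<Sum>m=0..l. \<Sum>r=0..l-m. ?c m r * (deriv ^^ Suc \<nu>) (\<lambda>v. ln v ^ (l - m - r)) u)"
      unfolding dL_def by (simp only: funpow_Suc_right o_apply)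
    finally show ?thesis .
  qed
  have gam: "real \<kappa> * Gamma (real (\<kappa> - 1) + 1) = Gamma (real \<kappa> + 1)"
  proof -
    have g1: "Gamma (real n + 1) = fact n" for n using Gamma_fact[of n] by (simp add: add.commute)
    show ?thesis unfolding g1 using k by (simp add: fact_reduce[of \<kappa>])
  qed
  have fal: "falling (real \<kappa>) (Suc \<nu>) = real \<kappa> * falling (real (\<kappa> - 1)) \<nu>"
    unfolding falling_def prod.lessThan_Suc_shift using k by (simp add: of_nat_diff algebra_simps)
  have IH: "(deriv^^\<nu>) (\<lambda>v. Ktilde l v (\<kappa> - 1)) u =
     falling (real (\<kappa> - 1)) \<nu> * Ktilde l u (\<kappa> - 1 - \<nu>)
     + (\<Sum>j<\<nu>. \<Sum>m=0..l. \<Sum>r=0..l-m.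
          (-1)^r * Gamma (real (\<kappa> - 1) + 1) / (fact m * fact (l - m - r))
          * Ecoef (\<kappa> - 1 - j) m * Ccoef r 0
          * (deriv ^^ (\<nu> - j)) (\<lambda>v. ln v ^ (l - m - r)) u)"
    using Suc.IH[OF kn] Suc.prems by simp
  have S2: "real \<kappa> * (\<Sum>j<\<nu>. \<Sum>m=0..l. \<Sum>r=0..l-m.
          (-1)^r * Gamma (real (\<kappa> - 1) + 1) / (fact m * fact (l - m - r))
          * Ecoef (\<kappa> - 1 - j) m * Ccoef r 0
          * (deriv ^^ (\<nu> - j)) (\<lambda>v. ln v ^ (l - m - r)) u)
     = (\<Sum>j<\<nu>. \<Sum>m=0..l. \<Sum>r=0..l-m.
          (-1)^r * Gamma (real \<kappa> + 1) / (fact m * fact (l - m - r))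
          * Ecoef (\<kappa> - Suc j) m * Ccoef r 0
          * (deriv ^^ (Suc \<nu> - Suc j)) (\<lambda>v. ln v ^ (l - m - r)) u)"
    unfolding sum_distrib_left gam[symmetric]
    by (intro sum.cong refl) (simp add: divide_inverse mult_ac)
  show ?case
    unfolding step1 IH T fal sum.lessThan_Suc_shift S2[symmetric]
    using k by (simp add: algebra_simps)
qed

theorem lemma4:
  fixes l \<kappa> \<nu> :: nat and u :: real
  assumes "l \<ge> 1" and "\<kappa> \<ge> 1" and "1 \<le> \<nu>" and "\<nu> \<le> \<kappa>" and "u > 1"
  shows "(deriv ^^ \<nu>) (\<lambda>v. Ktilde l v \<kappa>) u =
     falling (real \<kappa>) \<nu> * Ktilde l u (\<kappa> - \<nu>)
     + (\<Sum>j=0..\<nu>-1. \<Sum>m=0..l. \<Sum>r=0..l-m.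
          (-1)^r * Gamma (real \<kappa> + 1) / (fact m * fact (l - m - r))
          * Ecoef (\<kappa> - j) m * Ccoef r 0
          * (deriv ^^ (\<nu> - j)) (\<lambda>v. ln v ^ (l - m - r)) u)"
proof -
  have "{0..\<nu>-1} = {..<\<nu>}" using assms(3) by auto
  then show ?thesis using main[OF assms(4), of u l] assms(5) by simp
qed

end
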